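(* Let $\mathcal{I}$ be an inclusion-wise minimal unsatisfiable instance of $\mathrm{CSP}(\mathcal{A})$, i.e., $\mathcal{I}$ is unsatisfiable but removing any single constraint yields a satisfiable instance. Then the primal graph of $\mathcal{I}$ is a cycle.
   Context: Allen's interval algebra has domain $\mathbb{I}=\{[a,b] : a,b\in\mathbb{Q},\ a<b\}$; for $I=[a,b]$ write $I^-=a$, $I^+=b$. Basic relations: $x\,\mathsf{p}\,y$ iff $x^+<y^-$; $x\,\mathsf{m}\,y$ iff $x^+=y^-$; $x\,\mathsf{o}\,y$ iff $x^-<y^-<x^+<y^+$; $x\,\mathsf{d}\,y$ iff $y^-<x^-$ and $x^+<y^+$; $x\,\mathsf{s}\,y$ iff $x^-=y^-$ and $x^+<y^+$; $x\,\mathsf{f}\,y$ iff $x^+=y^+$ and $y^-<x^-$; $x\equiv y$ iff $x=y$; inverses $\mathsf{ri}$ with $x\,\mathsf{ri}\,y$ iff $y\,\mathsf{r}\,x$; $\mathcal{A}$ is the set of these 13 relations. An instance of $\mathrm{CSP}(\mathcal{A})$ consists of variables and binary constraints $x\,R\,y$ with $R\in\mathcal{A}$; it is satisfiable if an assignment of intervals satisfies all constraints. The primal graph of an instance is the undirected multigraph whose vertices are the variables and which has one edge $\{x,y\}$ for each constraint $x\,R\,y$; loops and parallel edges are allowed, and a single loop or a pair of parallel edges counts as a cycle. *)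

theory Defs
  imports Complex_Main "HOL-Library.Multiset"
begin

type_synonym interval = "rat \<times> rat"

definition is_interval :: "interval \<Rightarrow> bool" where
  "is_interval I \<longleftrightarrow> fst I < snd I"

text \<open>The 13 basic relations of Allen's interval algebra.\<close>
datatype allen = Ap | Am | Ao | Ad | As | Af | Aeq | Api | Ami | Aoi | Adi | Asi | Afi

fun allen_rel :: "allen \<Rightarrow> interval \<Rightarrow> interval \<Rightarrow> bool" where
  "allen_rel Ap x y \<longleftrightarrow> snd x < fst y"
| "allen_rel Am x y \<longleftrightarrow> snd x = fst y"
| "allen_rel Ao x y \<longleftrightarrow> fst x < fst y \<and> fst y < snd x \<and> snd x < snd y"
| "allen_rel Ad x y \<longleftrightarrow> fst y < fst x \<and> snd x < snd y"
| "allen_rel As x y \<longleftrightarrow> fst x = fst y \<and> snd x < snd y"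
| "allen_rel Af x y \<longleftrightarrow> snd x = snd y \<and> fst y < fst x"
| "allen_rel Aeq x y \<longleftrightarrow> x = y"
| "allen_rel Api x y \<longleftrightarrow> snd y < fst x"
| "allen_rel Ami x y \<longleftrightarrow> snd y = fst x"
| "allen_rel Aoi x y \<longleftrightarrow> fst y < fst x \<and> fst x < snd y \<and> snd y < snd x"
| "allen_rel Adi x y \<longleftrightarrow> fst x < fst y \<and> snd y < snd x"
| "allen_rel Asi x y \<longleftrightarrow> fst y = fst x \<and> snd y < snd x"
| "allen_rel Afi x y \<longleftrightarrow> snd y = snd x \<and> fst x < fst y"

text \<open>An instance of CSP(A): a finite list of constraints (x, R, y), meaning x R y.
  Repetitions are allowed (the primal graph is a multigraph).\<close>
type_synonym 'v csp_instance = "('v \<times> allen \<times> 'v) list"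

definition satisfiable :: "'v csp_instance \<Rightarrow> bool" where
  "satisfiable C \<longleftrightarrow> (\<exists>\<sigma> :: 'v \<Rightarrow> interval. (\<forall>v. is_interval (\<sigma> v)) \<and>
      (\<forall>(x, R, y) \<in> set C. allen_rel R (\<sigma> x) (\<sigma> y)))"

definition remove_constraint :: "'v csp_instance \<Rightarrow> nat \<Rightarrow> 'v csp_instance" where
  "remove_constraint C i = take i C @ drop (Suc i) C"

definition minimal_unsat :: "'v csp_instance \<Rightarrow> bool" where
  "minimal_unsat C \<longleftrightarrow> \<not> satisfiable C \<and> (\<forall>i < length C. satisfiable (remove_constraint C i))"

text \<open>Primal graph: vertices are the variables of the instance, one (unordered) edge
  per constraint; an unordered edge {x,y} is represented as a set (a loop gives {x}).\<close>
definition vars :: "'v csp_instance \<Rightarrow> 'v set" where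
  "vars C = (\<Union>(x, R, y) \<in> set C. {x, y})"

definition primal_edges :: "'v csp_instance \<Rightarrow> 'v set multiset" where
  "primal_edges C = mset (map (\<lambda>(x, R, y). {x, y}) C)"

text \<open>A multigraph (V, E) is a cycle iff there are k \<ge> 1 distinct vertices v_0..v_{k-1}
  forming V such that the edge multiset is exactly {v_i, v_{(i+1) mod k}}, i < k.
  k = 1 is a single loop, k = 2 a pair of parallel edges, k \<ge> 3 a simple cycle.\<close>
definition is_cycle :: "'v set \<Rightarrow> 'v set multiset \<Rightarrow> bool" where
  "is_cycle V E \<longleftrightarrow> (\<exists>vs. vs \<noteq> [] \<and> distinct vs \<and> set vs = V \<and>
      E = mset (map (\<lambda>i. {vs ! i, vs ! ((i + 1) mod length vs)}) [0..<length vs]))"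

end

theory Submission
  imports Defs
begin

type_synonym 'v pt = "'v \<times> bool"
type_synonym 'v edge = "'v pt \<times> 'v pt \<times> bool \<times> ('v \<times> allen \<times> 'v) option"

definition src :: "'v edge \<Rightarrow> 'v pt" where [simp]: "src e = fst e"
definition dst :: "'v edge \<Rightarrow> 'v pt" where [simp]: "dst e = fst (snd e)"
definition strict :: "'v edge \<Rightarrow> bool" where [simp]: "strict e = fst (snd (snd e))"
definition lab :: "'v edge \<Rightarrow> ('v \<times> allen \<times> 'v) option" where [simp]: "lab e = snd (snd (snd e))"

fun pc :: "allen \<Rightarrow> 'v \<Rightarrow> 'v \<Rightarrow> ('v pt \<times> 'v pt \<times> bool) list" where
  "pc Ap x y = [((x,True),(y,False),True)]"
| "pc Am x y = [((x,True),(y,False),False), ((y,False),(x,True),False)]"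
| "pc Ao x y = [((x,False),(y,False),True), ((y,False),(x,True),True), ((x,True),(y,True),True)]"
| "pc Ad x y = [((y,False),(x,False),True), ((x,True),(y,True),True)]"
| "pc As x y = [((x,False),(y,False),False), ((y,False),(x,False),False), ((x,True),(y,True),True)]"
| "pc Af x y = [((x,True),(y,True),False), ((y,True),(x,True),False), ((y,False),(x,False),True)]"
| "pc Aeq x y = [((x,False),(y,False),False), ((y,False),(x,False),False),
                 ((x,True),(y,True),False), ((y,True),(x,True),False)]"
| "pc Api x y = [((y,True),(x,False),True)]"
| "pc Ami x y = [((y,True),(x,False),False), ((x,False),(y,True),False)]"
| "pc Aoi x y = [((y,False),(x,False),True), ((x,False),(y,True),True), ((y,True),(x,True),True)]"
| "pc Adi x y = [((x,False),(y,False),True), ((y,True),(x,True),True)]"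
| "pc Asi x y = [((y,False),(x,False),False), ((x,False),(y,False),False), ((y,True),(x,True),True)]"
| "pc Afi x y = [((y,True),(x,True),False), ((x,True),(y,True),False), ((x,False),(y,False),True)]"

lemma pc_correct:
  fixes f :: "'v pt \<Rightarrow> rat"
  shows "allen_rel R (f (x,False), f (x,True)) (f (y,False), f (y,True)) \<longleftrightarrow>
    (\<forall>(p,q,s)\<in>set (pc R x y). if s then f p < f q else f p \<le> f q)"
  by (cases R) auto

lemma pc_ends: "(p,q,s) \<in> set (pc R x y) \<Longrightarrow> (fst p = x \<and> fst q = y) \<or> (fst p = y \<and> fst q = x)"
  by (cases R) auto

definition Edges :: "('v \<times> allen \<times> 'v) set \<Rightarrow> 'v edge set" where
  "Edges D = {((v,False),(v,True),True,None) | v. True} \<union>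
     {(p,q,s,Some (x,R,y)) | p q s x R y. (x,R,y) \<in> D \<and> (p,q,s) \<in> set (pc R x y)}"

fun wpath :: "'v edge list \<Rightarrow> 'v pt \<Rightarrow> 'v pt \<Rightarrow> bool" where
  "wpath [] a b = (a = b)"
| "wpath (e # es) a b = (src e = a \<and> wpath es (dst e) b)"

definition okv :: "('v pt \<Rightarrow> rat) \<Rightarrow> 'v edge \<Rightarrow> bool" where
  "okv f e = (if strict e then f (src e) < f (dst e) else f (src e) \<le> f (dst e))"

lemma wpath_val:
  "wpath es a b \<Longrightarrow> \<forall>e\<in>set es. okv f e \<Longrightarrow> f a \<le> f b \<and> ((\<exists>e\<in>set es. strict e) \<longrightarrow> f a < f b)"
proof (induction es arbitrary: a)
  case Nil then show ?case by simp
next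
  case (Cons e es)
  then have "f (dst e) \<le> f b" "(\<exists>e\<in>set es. strict e) \<longrightarrow> f (dst e) < f b" "src e = a" "okv f e" by auto
  then show ?case unfolding okv_def by (auto split: if_splits)
qed

lemma sat_okv:
  assumes "satisfiable C"
  shows "\<exists>f. \<forall>e\<in>Edges (set C). okv f e"
proof -
  obtain \<sigma> :: "'a \<Rightarrow> interval" where iv: "\<forall>v. is_interval (\<sigma> v)"
    and cs: "\<forall>(x, R, y) \<in> set C. allen_rel R (\<sigma> x) (\<sigma> y)"
    using assms unfolding satisfiable_def by blast
  define f where "f p = (if snd p then snd (\<sigma> (fst p)) else fst (\<sigma> (fst p)))" for p
  have sx: "\<sigma> x = (f (x,False), f (x,True))" for x by (simp add: f_def)
  show ?thesis
  proof (intro exI ballI)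
    fix e assume "e \<in> Edges (set C)"
    then consider (i) v where "e = ((v,False),(v,True),True,None)"
      | (c) p q s x R y where "e = (p,q,s,Some (x,R,y))" "(x,R,y) \<in> set C" "(p,q,s) \<in> set (pc R x y)"
      unfolding Edges_def by blast
    then show "okv f e"
    proof cases
      case i then show ?thesis using iv[rule_format, of v] by (simp add: okv_def f_def is_interval_def)
    next
      case c
      have "allen_rel R (\<sigma> x) (\<sigma> y)" using cs c(2) by blast
      then have "allen_rel R (f (x,False), f (x,True)) (f (y,False), f (y,True))"
        by (simp only: sx)
      then have "\<forall>(p,q,s)\<in>set (pc R x y). if s then f p < f q else f p \<le> f q"
        using pc_correct[of R f x y] by blast
      then show ?thesis using c(1,3) by (auto simp: okv_def)
    qed
  qed
qed

lemma no_walk_if_sat: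
  assumes "satisfiable C" "wpath es p p" "set es \<subseteq> Edges (set C)" "\<exists>e\<in>set es. strict e"
  shows False
proof -
  obtain f where "\<forall>e\<in>Edges (set C). okv f e" using sat_okv[OF assms(1)] by blast
  then have "\<forall>e\<in>set es. okv f e" using assms(3) by blast
  from wpath_val[OF assms(2) this] assms(4) show False by simp
qed

lemma wpath_append: "wpath (xs @ ys) a b \<longleftrightarrow> (\<exists>m. wpath xs a m \<and> wpath ys m b)"
  by (induction xs arbitrary: a) auto

lemma finite_vars: "finite (vars C)"
  unfolding vars_def by auto

lemma sat_if_no_walk:
  assumes nw: "\<And>es p. wpath es p p \<Longrightarrow> set es \<subseteq> Edges (set C) \<Longrightarrow> \<exists>e\<in>set es. strict e \<Longrightarrow> False"
  shows "satisfiable C"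
proof -
  define E where "E = Edges (set C)"
  define sr where "sr r q \<longleftrightarrow> (\<exists>es. wpath es r q \<and> set es \<subseteq> E \<and> (\<exists>e\<in>set es. strict e))" for r q
  define Pts where "Pts = vars C \<times> (UNIV :: bool set)"
  define h where "h q = card {r\<in>Pts. sr r q}" for q
  have finP: "finite Pts" unfolding Pts_def using finite_vars[of C] by (simp add: finite_cartesian_product)
  have step: "sr r (dst e)" if eE: "e \<in> E" and srr: "sr r (src e)" for r e
  proof -
    obtain es where "wpath es r (src e)" "set es \<subseteq> E" "\<exists>e\<in>set es. strict e" using srr sr_def by blast
    moreover have "wpath (es @ [e]) r (dst e)" 
      unfolding wpath_append using \<open>wpath es r (src e)\<close> by (intro exI[of _ "src e"]) simp
    ultimately have "wpath (es @ [e]) r (dst e)" "set (es @ [e]) \<subseteq> E" "\<exists>e\<in>set (es @ [e]). strict e"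
      using eE by auto
    then show ?thesis unfolding sr_def by blast
  qed
  have one: "sr (src e) (dst e)" if "e \<in> E" "strict e" for e
    unfolding sr_def using that by (intro exI[of _ "[e]"]) auto
  have irr: "\<not> sr q q" for q unfolding sr_def E_def using nw by blast
  have mono: "h (src e) \<le> h (dst e)" if "e \<in> E" for e
    unfolding h_def by (rule card_mono) (use finP step[OF that] in auto)
  have smono: "h (src e) < h (dst e)" if "e \<in> E" "strict e" "src e \<in> Pts" for e
    unfolding h_def
  proof (rule psubset_card_mono)
    show "finite {r \<in> Pts. sr r (dst e)}" using finP by simp
    show "{r \<in> Pts. sr r (src e)} \<subset> {r \<in> Pts. sr r (dst e)}"
      using step[OF that(1)] one[OF that(1,2)] irr[of "src e"] that(3) by blast
  qed
  define \<sigma> where "\<sigma> v = (if v \<in> vars C then (of_nat (h (v,False)), of_nat (h (v,True))) else (0,1) :: interval)" for v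
  show ?thesis unfolding satisfiable_def
  proof (intro exI conjI allI ballI)
    fix v
    show "is_interval (\<sigma> v)"
    proof (cases "v \<in> vars C")
      case True
      have "((v,False),(v,True),True,None) \<in> E" unfolding E_def Edges_def by blast
      from smono[OF this] True show ?thesis by (simp add: \<sigma>_def is_interval_def Pts_def)
    qed (simp add: \<sigma>_def is_interval_def)
  next
    fix c assume c: "c \<in> set C"
    obtain x R y where cx: "c = (x,R,y)" by (cases c) auto
    have xy: "x \<in> vars C" "y \<in> vars C" using c cx unfolding vars_def by auto
    define f where "f p = (of_nat (h p) :: rat)" for p
    have sx: "\<sigma> x = (f (x,False), f (x,True))" "\<sigma> y = (f (y,False), f (y,True))"
      using xy by (simp_all add: \<sigma>_def f_def)
    have "\<forall>(p,q,s)\<in>set (pc R x y). if s then f p < f q else f p \<le> f q"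
    proof (intro ballI, clarify)
      fix p q s assume pq: "(p,q,s) \<in> set (pc R x y)"
      have eE: "(p,q,s,Some (x,R,y)) \<in> E" unfolding E_def Edges_def using pq c cx by blast
      have "p \<in> Pts" using pc_ends[OF pq] xy unfolding Pts_def by (cases p) auto
      then show "if s then f p < f q else f p \<le> f q"
        using mono[OF eE] smono[OF eE] by (auto simp: f_def)
    qed
    then show "case c of (x, R, y) \<Rightarrow> allen_rel R (\<sigma> x) (\<sigma> y)"
      using pc_correct[of R f x y] sx cx by simp
  qed
qed


lemma wpath_split:
  assumes "wpath es a b" "m < length es"
  shows "wpath (take m es) a (src (es!m)) \<and> wpath (drop m es) (src (es!m)) b"
proof -
  from assms(1) obtain x where x: "wpath (take m es) a x" "wpath (drop m es) x b"
    using wpath_append[of "take m es" "drop m es" a b] by auto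
  have "drop m es = es!m # drop (Suc m) es" using assms(2) by (simp add: Cons_nth_drop_Suc)
  with x(2) have "x = src (es!m)" by simp
  with x show ?thesis by simp
qed

lemma wpath_rot:
  assumes "wpath es p p" "m < length es"
  shows "wpath (drop m es @ take m es) (src (es!m)) (src (es!m))"
  using wpath_split[OF assms] unfolding wpath_append by blast

lemma rot_set: "set (drop m es @ take m es) = set es"
  by (metis append_take_drop_id set_append Un_commute)

lemma rot_nth: "m \<le> j \<Longrightarrow> j < length es \<Longrightarrow> (drop m es @ take m es) ! (j - m) = es ! j"
proof -
  assume a: "m \<le> j" "j < length es"
  then have "j - m < length (drop m es)" by simp
  then have "(drop m es @ take m es) ! (j - m) = drop m es ! (j - m)" by (simp add: nth_append)
  also have "\<dots> = es ! j" using a by simp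
  finally show ?thesis .
qed

lemma internal_edge: "e \<in> Edges D \<Longrightarrow> lab e = None \<Longrightarrow> \<exists>v. e = ((v,False),(v,True),True,None)"
  by (auto simp: Edges_def)

lemma cross_edge: "e \<in> Edges D \<Longrightarrow> lab e = Some c \<Longrightarrow> c \<in> D \<and>
   (case c of (x,R,y) \<Rightarrow> (fst (src e) = x \<and> fst (dst e) = y) \<or> (fst (src e) = y \<and> fst (dst e) = x))"
  by (auto simp: Edges_def dest: pc_ends)

lemma cross_noloop: "\<forall>(x,R,y)\<in>D. x \<noteq> y \<Longrightarrow> e \<in> Edges D \<Longrightarrow> lab e \<noteq> None \<Longrightarrow> fst (src e) \<noteq> fst (dst e)"
proof -
  assume a: "\<forall>(x,R,y)\<in>D. x \<noteq> y" "e \<in> Edges D" "lab e \<noteq> None"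
  from a(2,3) obtain p q s x R y where e: "e = (p,q,s,Some(x,R,y))" "(x,R,y) \<in> D" "(p,q,s) \<in> set (pc R x y)"
    by (auto simp: Edges_def)
  have "x \<noteq> y" using a(1) e(2) by blast
  with pc_ends[OF e(3)] e(1) show ?thesis by auto
qed

lemma edge_transfer: "e \<in> Edges D \<Longrightarrow> (\<forall>c. lab e = Some c \<longrightarrow> c \<in> D') \<Longrightarrow> e \<in> Edges D'"
  by (auto simp: Edges_def)

lemma int_in: "((v,False),(v,True),True,None) \<in> Edges D"
  by (auto simp: Edges_def)

fun ichain :: "'v \<Rightarrow> 'v edge list \<Rightarrow> 'v \<Rightarrow> bool" where
  "ichain u [] w = (u = w)"
| "ichain u (c # cs) w = (fst (src c) = u \<and> ichain (fst (dst c)) cs w)"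

lemma wpath_ichain:
  "wpath es a b \<Longrightarrow> set es \<subseteq> Edges D \<Longrightarrow> ichain (fst a) (filter (\<lambda>e. lab e \<noteq> None) es) (fst b)"
proof (induction es arbitrary: a)
  case Nil then show ?case by simp
next
  case (Cons e es)
  have IH: "ichain (fst (dst e)) (filter (\<lambda>e. lab e \<noteq> None) es) (fst b)"
    using Cons.IH[of "dst e"] Cons.prems by simp
  show ?case
  proof (cases "lab e = None")
    case True
    then obtain v where "e = ((v,False),(v,True),True,None)" using internal_edge[of e D] Cons.prems by auto
    then show ?thesis using IH Cons.prems by auto
  next
    case False
    then show ?thesis using IH Cons.prems by simp
  qed
qed

lemma ichain_nth: "ichain u cs w \<Longrightarrow> j < length cs \<Longrightarrow>
   fst (dst (cs!j)) = (if Suc j < length cs then fst (src (cs ! Suc j)) else w)"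
proof (induction cs arbitrary: u j)
  case Nil then show ?case by simp
next
  case (Cons c cs)
  show ?case
  proof (cases j)
    case 0 then show ?thesis using Cons.prems by (cases cs) auto
  next
    case (Suc j')
    then show ?thesis using Cons.IH[of "fst (dst c)" j'] Cons.prems by simp
  qed
qed

lemma ichain_hd: "ichain u cs w \<Longrightarrow> cs \<noteq> [] \<Longrightarrow> fst (src (cs!0)) = u"
  by (cases cs) auto

lemma wpath_int_only:
  "wpath es a b \<Longrightarrow> set es \<subseteq> Edges D \<Longrightarrow> \<forall>e\<in>set es. lab e = None \<Longrightarrow> es \<noteq> [] \<Longrightarrow> snd a = False \<and> snd b = True"
proof (induction es arbitrary: a)
  case Nil then show ?case by simp
next
  case (Cons e es)
  obtain v where e: "e = ((v,False),(v,True),True,None)" using internal_edge[of e D] Cons.prems by auto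
  show ?case
  proof (cases "es = []")
    case True then show ?thesis using Cons.prems e by auto
  next
    case False
    have "snd (dst e) = False" using Cons.IH[of "dst e"] Cons.prems False by auto
    then show ?thesis using e by simp
  qed
qed

lemma rem_mem: "i < length C \<Longrightarrow> m < length C \<Longrightarrow> m \<noteq> i \<Longrightarrow> C!m \<in> set (remove_constraint C i)"
proof -
  assume a: "i < length C" "m < length C" "m \<noteq> i"
  show ?thesis
  proof (cases "m < i")
    case True
    then have "take i C ! m = C ! m" by simp
    moreover have "take i C ! m \<in> set (take i C)" using True a by (intro nth_mem) simp
    ultimately show ?thesis unfolding remove_constraint_def by simp
  next
    case False
    then have mi: "m > i" using a by simp
    then have "drop (Suc i) C ! (m - Suc i) = C ! m" using a by simp
    moreover have "drop (Suc i) C ! (m - Suc i) \<in> set (drop (Suc i) C)" using mi a by (intro nth_mem) simp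
    ultimately show ?thesis unfolding remove_constraint_def by simp
  qed
qed

lemma sat_mono: "set D \<subseteq> set D' \<Longrightarrow> satisfiable D' \<Longrightarrow> satisfiable D"
  unfolding satisfiable_def by blast

fun wit :: "allen \<Rightarrow> interval \<times> interval" where
  "wit Ap = ((0,1),(2,3))"
| "wit Am = ((0,1),(1,2))"
| "wit Ao = ((0,2),(1,3))"
| "wit Ad = ((1,2),(0,3))"
| "wit As = ((0,1),(0,2))"
| "wit Af = ((1,2),(0,2))"
| "wit Aeq = ((0,1),(0,1))"
| "wit Api = ((2,3),(0,1))"
| "wit Ami = ((1,2),(0,1))"
| "wit Aoi = ((1,3),(0,2))"
| "wit Adi = ((0,3),(1,2))"
| "wit Asi = ((0,2),(0,1))"
| "wit Afi = ((0,2),(1,2))"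

lemma wit_ok: "allen_rel R (fst (wit R)) (snd (wit R)) \<and> is_interval (fst (wit R)) \<and> is_interval (snd (wit R))"
  by (cases R) (auto simp: is_interval_def)

lemma single_sat: "x \<noteq> y \<Longrightarrow> satisfiable [(x,R,y)]"
  unfolding satisfiable_def
  apply (rule exI[of _ "\<lambda>v. if v = x then fst (wit R) else if v = y then snd (wit R) else (0,1)"])
  using wit_ok[of R] by (auto simp: is_interval_def)

lemma loop_unsat: "R \<noteq> Aeq \<Longrightarrow> is_interval I \<Longrightarrow> \<not> allen_rel R I I"
  by (cases R) (auto simp: is_interval_def)

lemma main_noloop:
  assumes min: "minimal_unsat C" and noloop: "\<forall>(x,R,y)\<in>set C. x \<noteq> y"
  shows "is_cycle (vars C) (primal_edges C)"
proof -
  have unsat: "\<not> satisfiable C" and remsat: "\<And>i. i < length C \<Longrightarrow> satisfiable (remove_constraint C i)"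
    using min unfolding minimal_unsat_def by auto
  define E where "E = Edges (set C)"
  define W where "W es p \<longleftrightarrow> es \<noteq> [] \<and> wpath es p p \<and> set es \<subseteq> E \<and> (\<exists>e\<in>set es. strict e)" for es p
  have exW: "\<exists>es p. W es p"
  proof (rule ccontr)
    assume "\<not> ?thesis"
    then have "satisfiable C" by (intro sat_if_no_walk) (auto simp: W_def E_def)
    with unsat show False by simp
  qed
  define n where "n = (LEAST n. \<exists>es p. W es p \<and> length es = n)"
  obtain es p where W: "W es p" and len: "length es = n"
    using LeastI_ex[of "\<lambda>n. \<exists>es p. W es p \<and> length es = n"] exW unfolding n_def by blast
  have minl: "n \<le> length es'" if "W es' p'" for es' p'
    unfolding n_def using that by (intro Least_le) blast
  have wp: "wpath es p p" and esE: "set es \<subseteq> E" and ne: "es \<noteq> []" and st: "\<exists>e\<in>set es. strict e"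
    using W unfolding W_def by auto
  have esE': "set es \<subseteq> Edges (set C)" using esE E_def by simp

  have dsrc: "distinct (map src es)"
  proof (rule ccontr)
    assume "\<not> distinct (map src es)"
    then obtain i j where ij0: "i < n" "j < n" "i \<noteq> j" "src (es!i) = src (es!j)"
      by (auto simp: distinct_conv_nth len)
    then obtain i j where ij: "i < j" "j < n" "src (es!i) = src (es!j)"
      by (metis linorder_neq_iff)
    define es' where "es' = drop i es @ take i es"
    define q where "q = src (es!i)"
    have i_lt: "i < length es" using ij len by simp
    have w': "wpath es' q q" unfolding es'_def q_def using wpath_rot[OF wp i_lt] .
    have set': "set es' = set es" unfolding es'_def by (rule rot_set)
    have len': "length es' = n" unfolding es'_def using len by simp
    have nth': "es' ! (j - i) = es ! j" unfolding es'_def using ij len by (intro rot_nth) auto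
    define m where "m = j - i"
    have m: "0 < m" "m < n" using ij unfolding m_def by auto
    have "src (es' ! m) = q" using nth' ij(3) unfolding m_def q_def by simp
    then have sp: "wpath (take m es') q q" "wpath (drop m es') q q"
      using wpath_split[OF w', of m] m len' by auto
    have "set es' = set (take m es') \<union> set (drop m es')" by (metis append_take_drop_id set_append)
    then consider "\<exists>e\<in>set (take m es'). strict e" | "\<exists>e\<in>set (drop m es'). strict e" using st set' by auto
    then show False
    proof cases
      case 1
      have "W (take m es') q" unfolding W_def using sp 1 esE set' set_take_subset[of m es'] m len' by auto
      from minl[OF this] m len' show False by simp
    next
      case 2
      have "W (drop m es') q" unfolding W_def using sp 2 esE set' set_drop_subset[of m es'] m len' by auto
      from minl[OF this] m len' show False by simp
    qed
  qed

  have shortcut: False if c: "c \<in> set es" "lab c \<noteq> None" "src c = (v,False)" "(v,True) \<in> src ` set es" for c v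
  proof -
    obtain i where i: "i < n" "es!i = c" using c(1) len by (auto simp: in_set_conv_nth)
    define es' where "es' = drop i es @ take i es"
    have w': "wpath es' (v,False) (v,False)" using wpath_rot[OF wp, of i] i c(3) len unfolding es'_def by simp
    have set': "set es' = set es" unfolding es'_def by (rule rot_set)
    have len': "length es' = n" unfolding es'_def using len by simp
    have e0: "es' ! 0 = c" unfolding es'_def using rot_nth[of i i es] i len by simp
    obtain e' where e': "e' \<in> set es'" "src e' = (v,True)" using c(4) set' by auto
    obtain m where m: "m < n" "es'!m = e'" using e'(1) len' by (auto simp: in_set_conv_nth)
    have m0: "m \<noteq> 0"
    proof
      assume "m = 0"
      then have "src c = (v,True)" using m(2) e0 e'(2) by simp
      then show False using c(3) by simp
    qed
    have sp: "wpath (take m es') (v,False) (v,True)" "wpath (drop m es') (v,True) (v,False)"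
      using wpath_split[OF w', of m] m len' e'(2) by auto
    have cE: "c \<in> Edges (set C)" using c(1) esE' by auto
    have m1: "m \<noteq> 1"
    proof
      assume m1: "m = 1"
      have "es' \<noteq> []" using len' i by auto
      then have "take 1 es' = [es'!0]" by (cases es') auto
      then have "take m es' = [c]" using m1 e0 by simp
      then have "dst c = (v,True)" using sp(1) by simp
      then show False using cross_noloop[OF noloop cE c(2)] c(3) by simp
    qed
    define es2 where "es2 = drop m es' @ [((v,False),(v,True),True,None)]"
    have "wpath es2 (v,True) (v,True)" unfolding es2_def wpath_append using sp(2) by auto
    moreover have "set es2 \<subseteq> E" unfolding es2_def E_def
      using set_drop_subset[of m es'] set' esE' int_in by auto
    ultimately have "W es2 (v,True)" unfolding W_def es2_def by auto
    then have "n \<le> length es2" by (rule minl)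
    moreover have "length es2 = n - m + 1" unfolding es2_def using len' by simp
    ultimately show False using m0 m1 m by simp
  qed

  define cs where "cs = filter (\<lambda>e. lab e \<noteq> None) es"
  define k where "k = length cs"
  define vs where "vs = map (\<lambda>e. fst (src e)) cs"
  define ls where "ls = map (\<lambda>e. the (lab e)) cs"
  have csne: "cs \<noteq> []"
  proof
    assume "cs = []"
    then have "\<forall>e\<in>set es. lab e = None" unfolding cs_def filter_empty_conv by blast
    from wpath_int_only[OF wp esE' this ne] show False by simp
  qed
  have kpos: "0 < k" using csne unfolding k_def by simp
  have ch: "ichain (fst p) cs (fst p)" unfolding cs_def using wpath_ichain[OF wp esE'] .
  have vs0: "vs ! 0 = fst p" using ichain_hd[OF ch csne] csne unfolding vs_def by simp
  have nxt: "fst (dst (cs!j)) = vs ! ((j+1) mod k)" if j: "j < k" for j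
  proof (cases "Suc j < k")
    case True
    then show ?thesis using ichain_nth[OF ch, of j] j by (simp add: vs_def k_def)
  next
    case False
    then have "Suc j = k" using j by simp
    then have "(j+1) mod k = 0" by simp
    then show ?thesis using ichain_nth[OF ch, of j] vs0 j False by (simp add: k_def)
  qed
  have cs_in: "cs!j \<in> set es" "lab (cs!j) \<noteq> None" if "j < k" for j
    using that nth_mem[of j cs] unfolding k_def cs_def by auto

  have dvs: "distinct vs"
  proof (rule ccontr)
    assume "\<not> distinct vs"
    then obtain a b where ab: "a < k" "b < k" "a \<noteq> b" "vs!a = vs!b"
      by (auto simp: distinct_conv_nth vs_def k_def)
    have dcs: "distinct (map src cs)" using dsrc unfolding cs_def by (rule distinct_map_filter)
    have neq: "src (cs!a) \<noteq> src (cs!b)" using nth_eq_iff_index_eq[OF dcs, of a b] ab by (simp add: k_def)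
    have feq: "fst (src (cs!a)) = fst (src (cs!b))" using ab by (simp add: vs_def k_def)
    show False
    proof (cases "snd (src (cs!a))")
      case True
      then have sb: "snd (src (cs!b)) = False" using neq feq by (auto simp: prod_eq_iff)
      have "src (cs!a) = (fst (src (cs!b)), True)" using True feq by (simp add: prod_eq_iff)
      then have "(fst (src (cs!b)), True) \<in> src ` set es" using cs_in(1)[OF ab(1)] by (metis rev_image_eqI)
      moreover have "src (cs!b) = (fst (src (cs!b)), False)" using sb by (simp add: prod_eq_iff)
      ultimately show False using shortcut[of "cs!b" "fst (src (cs!b))"] cs_in[OF ab(2)] by blast
    next
      case False
      then have sb: "snd (src (cs!b)) = True" using neq feq by (auto simp: prod_eq_iff)
      have "src (cs!b) = (fst (src (cs!a)), True)" using sb feq by (simp add: prod_eq_iff)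
      then have "(fst (src (cs!a)), True) \<in> src ` set es" using cs_in(1)[OF ab(2)] by (metis rev_image_eqI)
      moreover have "src (cs!a) = (fst (src (cs!a)), False)" using False by (simp add: prod_eq_iff)
      ultimately show False using shortcut[of "cs!a" "fst (src (cs!a))"] cs_in[OF ab(1)] by blast
    qed
  qed

  have lsC: "ls!j \<in> set C \<and> (case ls!j of (x,R,y) \<Rightarrow> {x,y} = {vs!j, vs!((j+1) mod k)})" if j: "j < k" for j
  proof -
    obtain c where lc: "lab (cs!j) = Some c" using cs_in[OF j] by auto
    have lsj: "ls!j = c" using j lc unfolding ls_def k_def by simp
    have "cs!j \<in> Edges (set C)" using cs_in[OF j] esE' by auto
    from cross_edge[OF this lc] have cC: "c \<in> set C"
      and ends: "case c of (x,R,y) \<Rightarrow> (fst (src (cs!j)) = x \<and> fst (dst (cs!j)) = y) \<or> (fst (src (cs!j)) = y \<and> fst (dst (cs!j)) = x)"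
      by auto
    have s: "fst (src (cs!j)) = vs!j" using j by (simp add: vs_def k_def)
    show ?thesis using lsj cC ends s nxt[OF j] by (cases c) auto
  qed
  have lenvs: "length vs = k" "length ls = k" by (simp_all add: vs_def ls_def k_def)

  have setls: "set ls = set C"
  proof
    show sub1: "set ls \<subseteq> set C"
    proof
      fix c assume "c \<in> set ls"
      then obtain j where "j < k" "ls!j = c" by (auto simp: in_set_conv_nth lenvs)
      then show "c \<in> set C" using lsC by blast
    qed
    show "set C \<subseteq> set ls"
    proof
      fix c assume c: "c \<in> set C"
      show "c \<in> set ls"
      proof (rule ccontr)
        assume cn: "c \<notin> set ls"
        obtain j where j: "j < length C" "C!j = c" using c by (auto simp: in_set_conv_nth)
        have sub: "set ls \<subseteq> set (remove_constraint C j)"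
        proof
          fix c' assume c': "c' \<in> set ls"
          then have "c' \<in> set C" using sub1 by blast
          then obtain m where m: "m < length C" "C!m = c'" by (auto simp: in_set_conv_nth)
          moreover have "m \<noteq> j" using c' cn j m by auto
          ultimately show "c' \<in> set (remove_constraint C j)" using rem_mem j by metis
        qed
        have "set es \<subseteq> Edges (set (remove_constraint C j))"
        proof
          fix e assume e: "e \<in> set es"
          have eE: "e \<in> Edges (set C)" using e esE' by auto
          show "e \<in> Edges (set (remove_constraint C j))"
          proof (rule edge_transfer[OF eE], intro allI impI)
            fix c' assume l: "lab e = Some c'"
            have ln: "lab e \<noteq> None" unfolding l by simp
            have "e \<in> set cs" using e ln unfolding cs_def set_filter by blast
            then have "c' \<in> set ls" using l unfolding ls_def by force
            then show "c' \<in> set (remove_constraint C j)" using sub by blast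
          qed
        qed
        then show False using no_walk_if_sat[OF remsat[OF j(1)] wp _ st] by blast
      qed
    qed
  qed

  have dls: "distinct ls"
  proof (rule ccontr)
    assume "\<not> distinct ls"
    then obtain a0 b0 where ab0: "a0 < k" "b0 < k" "a0 \<noteq> b0" "ls!a0 = ls!b0"
      by (auto simp: distinct_conv_nth lenvs)
    then obtain a b where ab: "a < b" "b < k" "ls!a = ls!b"
      by (metis linorder_neq_iff)
    have a_lt: "a < k" using ab by simp
    obtain x R y where lx: "ls!a = (x,R,y)" by (cases "ls!a") auto
    have ea: "{x,y} = {vs!a, vs!((a+1) mod k)}" using lsC[OF a_lt] lx by simp
    have eb: "{x,y} = {vs!b, vs!((b+1) mod k)}" using lsC[OF ab(2)] lx ab(3) by simp
    have nab: "vs!a \<noteq> vs!b" using dvs ab by (simp add: nth_eq_iff_index_eq lenvs)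
    have e1: "vs!a = vs!((b+1) mod k)" and e2: "vs!b = vs!((a+1) mod k)"
      using ea eb nab by (auto simp: doubleton_eq_iff)
    have mk: "(b+1) mod k < k" "(a+1) mod k < k" using kpos by auto
    have i1: "a = (b+1) mod k" using e1 dvs mk a_lt by (simp add: nth_eq_iff_index_eq lenvs)
    have i2: "b = (a+1) mod k" using e2 dvs mk ab by (simp add: nth_eq_iff_index_eq lenvs)
    have "a + 1 < k" using ab by simp
    then have b1: "b = a + 1" using i2 by simp
    have k2: "k = 2 \<and> a = 0"
    proof (cases "a + 2 < k")
      case True
      then have "(b+1) mod k = a + 2" using b1 by simp
      then show ?thesis using i1 by simp
    next
      case False
      then have bk: "b + 1 = k" using b1 ab by simp
      then have "(b+1) mod k = 0" by simp
      then have a0: "a = 0" using i1 by linarith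
      show ?thesis using a0 b1 bk by linarith
    qed
    have "set ls = {(x,R,y)}"
    proof -
      have "ls ! 0 = (x,R,y)" "ls ! 1 = (x,R,y)" using lx ab(3) k2 b1 by auto
      moreover have "length ls = 2" using k2 lenvs by simp
      ultimately show ?thesis
        by (auto simp: in_set_conv_nth less_Suc_eq numeral_2_eq_2) 
    qed
    then have sC: "set C = set [(x,R,y)]" using setls by simp
    have "x \<noteq> y" using noloop sC by auto
    then have "satisfiable [(x,R,y)]" by (rule single_sat)
    then have "satisfiable C" using sat_mono sC by blast
    with unsat show False by simp
  qed

  have dC: "distinct C"
  proof (rule ccontr)
    assume "\<not> distinct C"
    then obtain i j where ij: "i < length C" "j < length C" "i \<noteq> j" "C!i = C!j"
      by (auto simp: distinct_conv_nth)
    have "set C \<subseteq> set (remove_constraint C i)"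
    proof
      fix c assume "c \<in> set C"
      then obtain m where m: "m < length C" "C!m = c" by (auto simp: in_set_conv_nth)
      show "c \<in> set (remove_constraint C i)"
      proof (cases "m = i")
        case True then show ?thesis using rem_mem[of i C j] ij m by auto
      next
        case False then show ?thesis using rem_mem[of i C m] ij m by auto
      qed
    qed
    then have "satisfiable C" using sat_mono remsat[OF ij(1)] by blast
    with unsat show False by simp
  qed

  have msetC: "mset C = mset ls" using set_eq_iff_mset_eq_distinct[OF dC dls] setls by simp
  have edges: "map (\<lambda>(x, R, y). {x, y}) ls = map (\<lambda>i. {vs ! i, vs ! ((i + 1) mod length vs)}) [0..<length vs]"
  proof (rule nth_equalityI)
    show "length (map (\<lambda>(x, R, y). {x, y}) ls) = length (map (\<lambda>i. {vs ! i, vs ! ((i + 1) mod length vs)}) [0..<length vs])"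
      by (simp add: lenvs)
    fix j assume "j < length (map (\<lambda>(x, R, y). {x, y}) ls)"
    then have j: "j < k" by (simp add: lenvs)
    obtain x R y where lj: "ls!j = (x,R,y)" by (cases "ls!j") auto
    then show "map (\<lambda>(x, R, y). {x, y}) ls ! j = map (\<lambda>i. {vs ! i, vs ! ((i + 1) mod length vs)}) [0..<length vs] ! j"
      using lsC[OF j] j by (simp add: lenvs)
  qed
  have pe: "primal_edges C = mset (map (\<lambda>(x, R, y). {x, y}) ls)"
    unfolding primal_edges_def by (simp add: msetC)
  have vC: "vars C = set vs"
  proof -
    have "vars C = \<Union> (set (map (\<lambda>(x, R, y). {x, y}) ls))"
      unfolding vars_def by (simp add: setls[symmetric])
    also have "\<dots> = \<Union> (set (map (\<lambda>i. {vs ! i, vs ! ((i + 1) mod length vs)}) [0..<length vs]))"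
      by (simp only: edges)
    also have "\<dots> = set vs"
    proof
      show "\<Union> (set (map (\<lambda>i. {vs ! i, vs ! ((i + 1) mod length vs)}) [0..<length vs])) \<subseteq> set vs"
        using kpos lenvs by auto
      show "set vs \<subseteq> \<Union> (set (map (\<lambda>i. {vs ! i, vs ! ((i + 1) mod length vs)}) [0..<length vs]))"
      proof
        fix v assume "v \<in> set vs"
        then obtain i where i: "i < length vs" "vs!i = v" by (auto simp: in_set_conv_nth)
        show "v \<in> \<Union> (set (map (\<lambda>i. {vs ! i, vs ! ((i + 1) mod length vs)}) [0..<length vs]))"
          by (rule UnionI[of "{vs!i, vs!((i+1) mod length vs)}"]) (use i in auto)
      qed
    qed
    finally show ?thesis .
  qed
  show ?thesis unfolding is_cycle_def
    using csne dvs vC pe edges by (intro exI[of _ vs]) (simp add: vs_def)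
qed

theorem mainTheorem4:
  fixes C :: "'v csp_instance"
  assumes "minimal_unsat C"
  shows "is_cycle (vars C) (primal_edges C)"
proof (cases "\<forall>(x,R,y)\<in>set C. x \<noteq> y")
  case True then show ?thesis using main_noloop assms by blast
next
  case False
  then obtain x R where c: "(x,R,x) \<in> set C" by auto
  have unsat: "\<not> satisfiable C" and remsat: "\<And>i. i < length C \<Longrightarrow> satisfiable (remove_constraint C i)"
    using assms unfolding minimal_unsat_def by auto
  obtain j where j: "j < length C" "C!j = (x,R,x)" using c by (auto simp: in_set_conv_nth)
  have RA: "R \<noteq> Aeq"
  proof
    assume RA: "R = Aeq"
    have "set C \<subseteq> set (remove_constraint C j) \<union> {(x,Aeq,x)}"
    proof
      fix c' assume "c' \<in> set C"
      then obtain m where m: "m < length C" "C!m = c'" by (auto simp: in_set_conv_nth)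
      show "c' \<in> set (remove_constraint C j) \<union> {(x,Aeq,x)}"
        using rem_mem[of j C m] m j RA by (cases "m = j") auto
    qed
    moreover obtain \<sigma> :: "'v \<Rightarrow> interval" where "\<forall>v. is_interval (\<sigma> v)"
      "\<forall>(x, R, y) \<in> set (remove_constraint C j). allen_rel R (\<sigma> x) (\<sigma> y)"
      using remsat[OF j(1)] unfolding satisfiable_def by blast
    ultimately have "satisfiable C" unfolding satisfiable_def by (intro exI[of _ \<sigma>]) auto
    with unsat show False by simp
  qed
  have ns: "\<not> satisfiable [(x,R,x)]" unfolding satisfiable_def using loop_unsat[OF RA] by fastforce
  have lC: "length C = 1"
  proof (rule ccontr)
    assume "length C \<noteq> 1"
    then have l2: "length C \<ge> 2" using j by linarith
    define i where "i = (if j = 0 then 1 else (0::nat))"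
    have i: "i < length C" "i \<noteq> j" using l2 unfolding i_def by auto
    have "set [(x,R,x)] \<subseteq> set (remove_constraint C i)" using rem_mem[of i C j] i j by auto
    then have "satisfiable [(x,R,x)]" using sat_mono remsat[OF i(1)] by blast
    with ns show False by simp
  qed
  then have CC: "C = [(x,R,x)]" using j by (cases C) auto
  show ?thesis unfolding CC is_cycle_def vars_def primal_edges_def by (intro exI[of _ "[x]"]) simp
qed

end
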